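(* Let $n\ge2$, $s\ge1$, and let $f:\mathbb{R}_{\ge0}\to\mathbb{R}_{\ge0}$ be super-additive with $c_f[s]<\infty$. Let $x(1),\ldots,x(s)\in\mathbb{R}^n_{\ge0}$, $x=\sum_{j=1}^s x(j)$, and let $e_1,\ldots,e_n>0$ be fixed reals. Let $i^*=\arg\max_{i}e_i^{-1}f(x_i)$ and suppose that for some constant $C>0$, $$\sum_{i=1}^n e_i^{-1}f(x_i)\le (C\ln^2 n)\cdot e_{i^*}^{-1}f(x_{i^*})\quad\text{and}\quad f(x_{i^*})>0.$$ For each server $j$ with $\sum_i e_i^{-1}f(x_i(j))>0$, let $\mathrm{SC}_j$ be the set of values of $N$ independent draws of a random index $\mathbf{i}\in[n]$ with $\Pr[\mathbf{i}=i]=e_i^{-1}f(x_i(j))/\sum_{i'}e_{i'}^{-1}f(x_{i'}(j))$ (draws independent across servers); for other servers let $\mathrm{SC}_j=\emptyset$. If $N\ge 32C\ln^3 n\cdot c_f[s]/s$, then $i^*\in\bigcup_j \mathrm{SC}_j$ with probability at least $1-1/n^4$.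
   Context: $f$ is super-additive if $f(x+y)\ge f(x)+f(y)$ for all $x,y\ge0$. For an integer $s\ge1$, $c_f[s]$ denotes the smallest real number such that $f(y_1+\cdots+y_s)\le\frac{c_f[s]}{s}\big(\sqrt{f(y_1)}+\cdots+\sqrt{f(y_s)}\big)^2$ for all $y_1,\ldots,y_s\ge0$. $\ln$ is the natural logarithm. *)

theory Defs
  imports "HOL-Probability.Probability"
begin

definition superadditive :: "(real \<Rightarrow> real) \<Rightarrow> bool" where
  "superadditive f \<longleftrightarrow> (\<forall>x y. 0 \<le> x \<longrightarrow> 0 \<le> y \<longrightarrow> f x + f y \<le> f (x + y))"

definition cf_admissible :: "(real \<Rightarrow> real) \<Rightarrow> nat \<Rightarrow> real \<Rightarrow> bool" where
  "cf_admissible f s c \<longleftrightarrow>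
     (\<forall>y :: nat \<Rightarrow> real. (\<forall>j<s. 0 \<le> y j) \<longrightarrow>
        f (\<Sum>j<s. y j) \<le> c / real s * (\<Sum>j<s. sqrt (f (y j)))\<^sup>2)"

(* c_f[s]: the smallest admissible constant (meaningful when one exists, i.e. c_f[s] < \<infinity>) *)
definition cf :: "(real \<Rightarrow> real) \<Rightarrow> nat \<Rightarrow> real" where
  "cf f s = Inf {c. cf_admissible f s c}"

definition draw_pmf :: "nat \<Rightarrow> (nat \<Rightarrow> real) \<Rightarrow> nat pmf" where
  "draw_pmf n w = embed_pmf (\<lambda>i. if i < n then w i / (\<Sum>i'<n. w i') else 0)"

definition SC_pmf :: "nat \<Rightarrow> nat \<Rightarrow> (nat \<Rightarrow> real) \<Rightarrow> nat set pmf" where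
  "SC_pmf n N w =
     (if 0 < (\<Sum>i<n. w i)
      then map_pmf (\<lambda>d. d ` {..<N}) (Pi_pmf {..<N} 0 (\<lambda>_. draw_pmf n w))
      else return_pmf {})"

(* joint distribution of (SC_j)_{j<s}, independent across servers;
   x j i is coordinate i of the vector x(j) *)
definition all_SC_pmf :: "nat \<Rightarrow> nat \<Rightarrow> nat \<Rightarrow> (real \<Rightarrow> real) \<Rightarrow> (nat \<Rightarrow> real)
                          \<Rightarrow> (nat \<Rightarrow> nat \<Rightarrow> real) \<Rightarrow> (nat \<Rightarrow> nat set) pmf" where
  "all_SC_pmf n s N f e x = Pi_pmf {..<s} {} (\<lambda>j. SC_pmf n N (\<lambda>i. f (x j i) / e i))"

end

theory Submission
  imports Defs
begin

lemma draw_compl: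
  assumes w: "\<And>i. i < n \<Longrightarrow> 0 \<le> w i" and S: "0 < (\<Sum>i<n. w i)" and k: "k < n"
  shows "measure_pmf.prob (draw_pmf n w) (-{k}) = 1 - w k / (\<Sum>i<n. w i)"
proof -
  define g where "g = (\<lambda>i. if i < n then w i / (\<Sum>i'<n. w i') else 0)"
  have gnn: "\<And>i. 0 \<le> g i" using w S by (auto simp: g_def)
  have "(\<integral>\<^sup>+i. ennreal (g i) \<partial>count_space UNIV) = (\<Sum>i<n. ennreal (g i))"
    by (rule nn_integral_count_space') (auto simp: g_def)
  also have "\<dots> = ennreal (\<Sum>i<n. g i)" using gnn by (simp add: sum_ennreal)
  also have "(\<Sum>i<n. g i) = 1" using S by (simp add: g_def sum_divide_distrib[symmetric])
  finally have int: "(\<integral>\<^sup>+i. ennreal (g i) \<partial>count_space UNIV) = 1" by simp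
  have pk: "pmf (draw_pmf n w) k = w k / (\<Sum>i<n. w i)"
    unfolding draw_pmf_def g_def[symmetric] using gnn int k
    by (subst pmf_embed_pmf) (auto simp: g_def)
  have "measure_pmf.prob (draw_pmf n w) (-{k}) = measure_pmf.prob (draw_pmf n w) (space (measure_pmf (draw_pmf n w)) - {k})"
    by (simp add: Compl_eq_Diff_UNIV)
  also have "\<dots> = 1 - pmf (draw_pmf n w) k"
    by (subst measure_pmf.prob_compl) (auto simp: measure_pmf_single)
  finally show ?thesis using pk by simp
qed

lemma SC_prob:
  assumes w: "\<And>i. i < n \<Longrightarrow> 0 \<le> w i" and k: "k < n"
  shows "measure_pmf.prob (SC_pmf n N w) {S. k \<notin> S} = (1 - w k / (\<Sum>i<n. w i)) ^ N"
proof (cases "0 < (\<Sum>i<n. w i)")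
  case True
  have "measure_pmf.prob (SC_pmf n N w) {S. k \<notin> S}
     = measure_pmf.prob (Pi_pmf {..<N} 0 (\<lambda>_. draw_pmf n w)) ((\<lambda>d. d ` {..<N}) -` {S. k \<notin> S})"
    using True by (simp add: SC_pmf_def)
  also have "(\<lambda>d. d ` {..<N}) -` {S. k \<notin> S} = Pi {..<N} (\<lambda>_. -{k})" by auto
  also have "measure_pmf.prob (Pi_pmf {..<N} 0 (\<lambda>_. draw_pmf n w)) (Pi {..<N} (\<lambda>_. -{k}))
      = (\<Prod>x\<in>{..<N}. measure_pmf.prob (draw_pmf n w) (-{k}))"
    by (rule measure_Pi_pmf_Pi) simp
  also have "\<dots> = (1 - w k / (\<Sum>i<n. w i)) ^ N" using draw_compl[OF w True k] by simp
  finally show ?thesis .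
next
  case False
  then have "(\<Sum>i<n. w i) = 0" using w by (meson not_less sum_nonneg order.antisym lessThan_iff)
  then show ?thesis using False by (simp add: SC_pmf_def)
qed


lemma sup_sum:
  assumes sup: "superadditive f" and nn: "\<And>t. 0 \<le> t \<Longrightarrow> 0 \<le> f t"
    and fin: "finite J" and y: "\<And>j. j \<in> J \<Longrightarrow> 0 \<le> y j"
  shows "(\<Sum>j\<in>J. f (y j)) \<le> f (\<Sum>j\<in>J. y j)"
  using fin y
proof (induction J rule: finite_induct)
  case empty then show ?case using nn by simp
next
  case (insert a J)
  have h: "(\<Sum>j\<in>J. f (y j)) \<le> f (\<Sum>j\<in>J. y j)" using insert by auto
  have "0 \<le> (\<Sum>j\<in>J. y j)" using insert.prems by (auto intro: sum_nonneg)
  moreover have "0 \<le> y a" using insert.prems by auto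
  ultimately have "f (y a) + f (\<Sum>j\<in>J. y j) \<le> f (y a + (\<Sum>j\<in>J. y j))"
    using sup unfolding superadditive_def by blast
  then show ?case using h insert.hyps by simp
qed

theorem lemma4p1:
  fixes n s N :: nat and f :: "real \<Rightarrow> real" and x :: "nat \<Rightarrow> nat \<Rightarrow> real"
    and e :: "nat \<Rightarrow> real" and C :: real and istar :: nat
  assumes "n \<ge> 2" and "s \<ge> 1"
    and f_nonneg: "\<And>t. 0 \<le> t \<Longrightarrow> 0 \<le> f t"
    and f_sup: "superadditive f"
    and cf_fin: "\<exists>c. cf_admissible f s c"
    and x_nonneg: "\<And>j i. j < s \<Longrightarrow> i < n \<Longrightarrow> 0 \<le> x j i"
    and e_pos: "\<And>i. i < n \<Longrightarrow> 0 < e i"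
    and istar: "istar < n"
      "\<And>i. i < n \<Longrightarrow> f (\<Sum>j<s. x j i) / e i \<le> f (\<Sum>j<s. x j istar) / e istar"
    and "C > 0"
    and "(\<Sum>i<n. f (\<Sum>j<s. x j i) / e i)
           \<le> (C * (ln (real n))\<^sup>2) * (f (\<Sum>j<s. x j istar) / e istar)"
    and "f (\<Sum>j<s. x j istar) > 0"
    and "real N \<ge> 32 * C * (ln (real n)) ^ 3 * cf f s / real s"
  shows "measure_pmf.prob (all_SC_pmf n s N f e x) {SC. istar \<in> (\<Union>j<s. SC j)}
           \<ge> 1 - 1 / real n ^ 4"
  proof -
  define w where "w = (\<lambda>j i. f (x j i) / e i)"
  define W where "W = (\<lambda>j. \<Sum>i<n. w j i)"
  define a where "a = (\<lambda>j. w j istar)"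
  define p where "p = (\<lambda>j. a j / W j)"
  define L where "L = ln (real n)"
  define F where "F = f (\<Sum>j<s. x j istar)"
  define K where "K = (\<Sum>j<s. sqrt (f (x j istar)))\<^sup>2"
  define A where "A = F / e istar"
  have L: "L > 0" using assms(1) by (simp add: L_def)
  have estar: "e istar > 0" using e_pos istar(1) by auto
  have F: "F > 0" using assms(12) by (simp add: F_def)
  have wnn: "\<And>j i. j < s \<Longrightarrow> i < n \<Longrightarrow> 0 \<le> w j i"
    using f_nonneg x_nonneg e_pos by (simp add: w_def less_imp_le)
  have Wnn: "\<And>j. j < s \<Longrightarrow> 0 \<le> W j" unfolding W_def using wnn by (auto intro: sum_nonneg)
  have ann: "\<And>j. j < s \<Longrightarrow> 0 \<le> a j" using wnn istar(1) by (simp add: a_def)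
  have aW: "\<And>j. j < s \<Longrightarrow> a j \<le> W j" unfolding a_def W_def
    using wnn istar(1) by (intro member_le_sum) auto
  have pnn: "\<And>j. j < s \<Longrightarrow> 0 \<le> p j" using ann Wnn by (simp add: p_def)
  have ple: "\<And>j. j < s \<Longrightarrow> p j \<le> 1" 
  proof -
    fix j assume j: "j < s"
    show "p j \<le> 1"
    proof (cases "W j = 0")
      case True then show ?thesis by (simp add: p_def)
    next
      case False then have "W j > 0" using Wnn[OF j] by simp
      then show ?thesis using aW[OF j] by (simp add: p_def)
    qed
  qed
  have sumW: "(\<Sum>j<s. W j) \<le> C * L\<^sup>2 * A"
  proof -
    have "(\<Sum>j<s. W j) = (\<Sum>i<n. (\<Sum>j<s. f (x j i)) / e i)"
      unfolding W_def w_def by (subst sum.swap) (simp add: sum_divide_distrib)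
    also have "\<dots> \<le> (\<Sum>i<n. f (\<Sum>j<s. x j i) / e i)"
      using e_pos x_nonneg
      by (intro sum_mono divide_right_mono sup_sum[OF f_sup f_nonneg]) (auto intro: less_imp_le)
    also have "\<dots> \<le> C * L\<^sup>2 * A" using assms(11) by (simp add: L_def A_def F_def)
    finally show ?thesis .
  qed
  obtain c0 where c0: "cf_admissible f s c0" using cf_fin by blast
  have adm: "F \<le> c / real s * K" if "cf_admissible f s c" for c
  proof -
    have h: "\<And>j. j<s \<Longrightarrow> 0 \<le> x j istar" using x_nonneg istar(1) by simp
    have "\<forall>y :: nat \<Rightarrow> real. (\<forall>j<s. 0 \<le> y j) \<longrightarrow>
        f (\<Sum>j<s. y j) \<le> c / real s * (\<Sum>j<s. sqrt (f (y j)))\<^sup>2"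
      using that unfolding cf_admissible_def .
    from this[rule_format, OF h] show ?thesis unfolding F_def K_def .
  qed
  have s: "real s > 0" using assms(2) by simp
  have Knn: "K \<ge> 0" by (simp add: K_def)
  have K: "K > 0"
  proof (rule ccontr)
    assume "\<not> K > 0" then have "K = 0" using Knn by simp
    then show False using adm[OF c0] F by simp
  qed
  have cfge: "F * real s / K \<le> cf f s"
    unfolding cf_def
  proof (rule cInf_greatest)
    show "{c. cf_admissible f s c} \<noteq> {}" using c0 by blast
  next
    fix c assume "c \<in> {c. cf_admissible f s c}"
    then have "F \<le> c / real s * K" using adm by blast
    then have "F * real s \<le> c * K" using s by (simp add: field_simps)
    then show "F * real s / K \<le> c" using K by (simp add: divide_le_eq)
  qed
  have sqa: "(\<Sum>j<s. sqrt (a j))\<^sup>2 = K / e istar"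
  proof -
    have "(\<Sum>j<s. sqrt (a j)) = (\<Sum>j<s. sqrt (f (x j istar))) / sqrt (e istar)"
      by (simp add: a_def w_def real_sqrt_divide sum_divide_distrib)
    then show ?thesis using estar by (simp add: K_def power_divide)
  qed
  have CS: "(\<Sum>j<s. sqrt (a j))\<^sup>2 \<le> (\<Sum>j<s. p j) * (\<Sum>j<s. W j)"
  proof -
    have eq: "sqrt (a j) = sqrt (p j) * sqrt (W j)" if "j < s" for j
    proof (cases "W j = 0")
      case True then have "a j = 0" using aW[OF that] ann[OF that] by simp
      then show ?thesis using True by simp
    next
      case False then show ?thesis by (simp add: p_def real_sqrt_mult[symmetric])
    qed
    have "(\<Sum>j<s. sqrt (a j))\<^sup>2 = (\<Sum>j<s. sqrt (p j) * sqrt (W j))\<^sup>2"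
      using eq by simp
    also have "\<dots> \<le> (\<Sum>j<s. (sqrt (p j))\<^sup>2) * (\<Sum>j<s. (sqrt (W j))\<^sup>2)"
      by (rule Cauchy_Schwarz_ineq_sum)
    also have "\<dots> = (\<Sum>j<s. p j) * (\<Sum>j<s. W j)"
      using pnn Wnn by simp
    finally show ?thesis .
  qed
  have Psum: "0 \<le> (\<Sum>j<s. p j)" using pnn by (auto intro: sum_nonneg)
  have K1: "K \<le> (\<Sum>j<s. p j) * (C * L\<^sup>2 * F)"
  proof -
    have "K / e istar \<le> (\<Sum>j<s. p j) * (C * L\<^sup>2 * A)"
      using CS sqa sumW Psum by (metis mult_left_mono order_trans)
    then show ?thesis using estar by (simp add: A_def field_simps)
  qed
  have N1: "real N \<ge> 32 * C * L ^ 3 * F / K"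
  proof -
    have "32 * C * L ^ 3 * F / K = 32 * C * L ^ 3 * (F * real s / K) / real s"
      using s by simp
    also have "\<dots> \<le> 32 * C * L ^ 3 * cf f s / real s"
      using cfge s L assms(10) by (intro divide_right_mono mult_left_mono) auto
    finally show ?thesis using assms(13) by (simp add: L_def)
  qed
  have key: "real N * (\<Sum>j<s. p j) \<ge> 32 * L"
  proof -
    have "32 * L = 32 * L * (K / K)" using K by simp
    also have "\<dots> \<le> 32 * L * ((\<Sum>j<s. p j) * (C * L\<^sup>2 * F) / K)"
      using K1 K L by (intro mult_left_mono divide_right_mono) auto
    also have "\<dots> = (32 * C * L ^ 3 * F / K) * (\<Sum>j<s. p j)"
      by (simp add: power2_eq_square power3_eq_cube)
    also have "\<dots> \<le> real N * (\<Sum>j<s. p j)"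
      using N1 Psum by (rule mult_right_mono)
    finally show ?thesis .
  qed
  have ev: "{SC. istar \<in> (\<Union>j<s. SC j)} = space (measure_pmf (all_SC_pmf n s N f e x)) - Pi {..<s} (\<lambda>_. {S. istar \<notin> S})"
    by auto
  have fail: "measure_pmf.prob (all_SC_pmf n s N f e x) (Pi {..<s} (\<lambda>_. {S. istar \<notin> S}))
      = (\<Prod>j<s. (1 - p j) ^ N)"
    unfolding all_SC_pmf_def
    apply (subst measure_Pi_pmf_Pi, simp)
    apply (rule prod.cong, simp)
    apply (subst SC_prob)
    using wnn istar(1)
    by (auto simp: p_def a_def W_def w_def)
  have "(\<Prod>j<s. (1 - p j) ^ N) \<le> (\<Prod>j<s. exp (- (real N * p j)))"
  proof (rule prod_mono)
    fix j assume "j \<in> {..<s}"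
    then have j: "j < s" by simp
    have "(1 - p j) ^ N \<le> (exp (- p j)) ^ N"
      using ple[OF j] by (intro power_mono) (auto simp: exp_ge_add_one_self[of "- p j", simplified])
    also have "\<dots> = exp (- (real N * p j))"
      by (simp add: exp_of_nat_mult[symmetric])
    finally show "0 \<le> (1 - p j) ^ N \<and> (1 - p j) ^ N \<le> exp (- (real N * p j))"
      using ple[OF j] by simp
  qed
  also have "\<dots> = exp (- (real N * (\<Sum>j<s. p j)))"
    by (simp add: exp_sum[symmetric] sum_negf sum_distrib_left)
  also have "\<dots> \<le> exp (- (4 * L))" using key L by simp
  also have "\<dots> = 1 / real n ^ 4"
  proof -
    have "exp (4 * L) = exp (real 4 * L)" by simp
    also have "\<dots> = exp L ^ 4" by (rule exp_of_nat_mult)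
    also have "exp L = real n" using assms(1) by (simp add: L_def)
    finally show ?thesis by (simp add: exp_minus inverse_eq_divide)
  qed
  finally have pf: "(\<Prod>j<s. (1 - p j) ^ N) \<le> 1 / real n ^ 4" .
  have "measure_pmf.prob (all_SC_pmf n s N f e x) {SC. istar \<in> (\<Union>j<s. SC j)}
      = 1 - (\<Prod>j<s. (1 - p j) ^ N)"
    unfolding ev by (subst measure_pmf.prob_compl) (auto simp: fail)
  then show ?thesis using pf by simp
qed

end
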